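(* Let $n\ge1$, let $\mathcal W$ be an $(n,T(n))$-weakly Ramsey non-P-point in standard position on $\omega^2$, let $\tau$ be any $n$-type, and let $[\omega^2]_\tau$ be partitioned into finitely many pieces. Then there is $H\in\mathcal W$ such that $[H]_\tau$ is included in one of the pieces.
   Context: Ultrafilters are nonprincipal. A non-P-point in standard position is an ultrafilter $\mathcal W$ on $\omega^2$ such that the first projection $\pi_1:\omega^2\to\omega$ is neither finite-to-one nor constant on any set in $\mathcal W$. For a countably infinite set $S$, an ultrafilter $\mathcal W$ on $S$ is $(n,t)$-weakly Ramsey if whenever $[S]^n$ (the $n$-element subsets of $S$) is partitioned into finitely many pieces, there is $H\in\mathcal W$ with $[H]^n$ meeting at most $t$ pieces. An $n$-type is a linear pre-order of the $2n$ formal symbols $x_1,\dots,x_n,y_1,\dots,y_n$ such that $y_1<\dots<y_n$ (strictly), each $x_i<y_i$ strictly, and any two distinct equivalent symbols are both $x$'s. An $n$-element set $\{\langle a_1,b_1\rangle,\dots,\langle a_n,b_n\rangle\}\subseteq\omega^2$, listed so that $b_1<\dots<b_n$ (which requires distinct second coordinates), realizes the $n$-type $\tau$ if for all symbols $s,t$ we have $s\le_\tau t$ iff $v(s)\le v(t)$, where $v(x_i)=a_i$, $v(y_i)=b_i$. $T(n)$ is the number of $n$-types. For $S\subseteq\omega^2$, $[S]_\tau$ is the set of $n$-element subsets of $S$ realizing $\tau$. *)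

theory Defs
  imports Main
begin

type_synonym pt = "nat \<times> nat"

definition is_ultrafilter :: "'a set set \<Rightarrow> bool" where
  "is_ultrafilter U \<longleftrightarrow> UNIV \<in> U \<and> {} \<notin> U
     \<and> (\<forall>A B. A \<in> U \<and> A \<subseteq> B \<longrightarrow> B \<in> U)
     \<and> (\<forall>A B. A \<in> U \<and> B \<in> U \<longrightarrow> A \<inter> B \<in> U)
     \<and> (\<forall>A. A \<in> U \<or> - A \<in> U)"

definition nonprincipal :: "'a set set \<Rightarrow> bool" where
  "nonprincipal U \<longleftrightarrow> (\<forall>A\<in>U. infinite A)"

definition finite_to_one_on :: "('a \<Rightarrow> 'b) \<Rightarrow> 'a set \<Rightarrow> bool" where
  "finite_to_one_on f A \<longleftrightarrow> (\<forall>k. finite {p \<in> A. f p = k})"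

definition constant_on :: "('a \<Rightarrow> 'b) \<Rightarrow> 'a set \<Rightarrow> bool" where
  "constant_on f A \<longleftrightarrow> (\<exists>k. \<forall>p\<in>A. f p = k)"

definition non_P_point_std :: "pt set set \<Rightarrow> bool" where
  "non_P_point_std W \<longleftrightarrow> is_ultrafilter W \<and> nonprincipal W
     \<and> (\<forall>A\<in>W. \<not> finite_to_one_on fst A \<and> \<not> constant_on fst A)"

definition nsubsets :: "'a set \<Rightarrow> nat \<Rightarrow> 'a set set" where
  "nsubsets H n = {F. F \<subseteq> H \<and> finite F \<and> card F = n}"

text \<open>(n,t)-weakly Ramsey ultrafilter on the (countably infinite) type 'a:
  partitions of [S]^n into finitely many pieces are given by colourings
  c with finitely many values on [S]^n.\<close>
definition weakly_ramsey :: "nat \<Rightarrow> nat \<Rightarrow> 'a set set \<Rightarrow> bool" where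
  "weakly_ramsey n t U \<longleftrightarrow>
     (\<forall>c :: 'a set \<Rightarrow> nat. finite (c ` nsubsets UNIV n) \<longrightarrow>
        (\<exists>H\<in>U. card (c ` nsubsets H n) \<le> t))"

text \<open>Formal symbols: (False, i) is x_i and (True, i) is y_i, for 1 <= i <= n.\<close>
type_synonym sym = "bool \<times> nat"

definition Sym :: "nat \<Rightarrow> sym set" where
  "Sym n = UNIV \<times> {1..n}"

definition strict_in :: "(sym \<times> sym) set \<Rightarrow> sym \<Rightarrow> sym \<Rightarrow> bool" where
  "strict_in R s t \<longleftrightarrow> (s, t) \<in> R \<and> (t, s) \<notin> R"

definition is_ntype :: "nat \<Rightarrow> (sym \<times> sym) set \<Rightarrow> bool" where
  "is_ntype n R \<longleftrightarrow> R \<subseteq> Sym n \<times> Sym n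
     \<and> (\<forall>s\<in>Sym n. (s, s) \<in> R)
     \<and> trans R
     \<and> (\<forall>s\<in>Sym n. \<forall>t\<in>Sym n. (s, t) \<in> R \<or> (t, s) \<in> R)
     \<and> (\<forall>i\<in>{1..n}. \<forall>j\<in>{1..n}. i < j \<longrightarrow> strict_in R (True, i) (True, j))
     \<and> (\<forall>i\<in>{1..n}. strict_in R (False, i) (True, i))
     \<and> (\<forall>s\<in>Sym n. \<forall>t\<in>Sym n. s \<noteq> t \<and> (s, t) \<in> R \<and> (t, s) \<in> R
           \<longrightarrow> fst s = False \<and> fst t = False)"

definition T :: "nat \<Rightarrow> nat" where
  "T n = card {R. is_ntype n R}"

definition realizes :: "nat \<Rightarrow> pt set \<Rightarrow> (sym \<times> sym) set \<Rightarrow> bool" where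
  "realizes n F R \<longleftrightarrow> (\<exists>a b :: nat \<Rightarrow> nat.
      strict_mono_on {1..n} b
      \<and> F = (\<lambda>i. (a i, b i)) ` {1..n}
      \<and> (\<forall>s\<in>Sym n. \<forall>t\<in>Sym n.
            (s, t) \<in> R \<longleftrightarrow>
            (if fst s then b (snd s) else a (snd s)) \<le> (if fst t then b (snd t) else a (snd t))))"

definition typed_subsets :: "nat \<Rightarrow> pt set \<Rightarrow> (sym \<times> sym) set \<Rightarrow> pt set set" where
  "typed_subsets n S R = {F. F \<subseteq> S \<and> finite F \<and> card F = n \<and> realizes n F R}"

end

theory Submission
  imports Defs "HOL-Library.Infinite_Set"
begin

lemma uf_props:
  assumes "is_ultrafilter W"
  shows "{} \<notin> W" "\<And>A B. A \<in> W \<Longrightarrow> A \<subseteq> B \<Longrightarrow> B \<in> W"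
    "\<And>A B. A \<in> W \<Longrightarrow> B \<in> W \<Longrightarrow> A \<inter> B \<in> W"
    "\<And>A. A \<in> W \<or> - A \<in> W"
  using assms unfolding is_ultrafilter_def by blast+

lemma uf_finite_union:
  assumes U: "is_ultrafilter W" and fin: "finite I"
  shows "(\<Union>i\<in>I. P i) \<in> W \<Longrightarrow> \<exists>i\<in>I. P i \<in> W"
  using fin
proof (induction I rule: finite_induct)
  case empty
  then show ?case using uf_props(1)[OF U] by simp
next
  case (insert x F)
  show ?case
  proof (cases "P x \<in> W")
    case True then show ?thesis by blast
  next
    case False
    then have "- P x \<in> W" using uf_props(4)[OF U] by blast
    from uf_props(3)[OF U this insert.prems] have "- P x \<inter> (\<Union>i\<in>insert x F. P i) \<in> W" .
    moreover have "- P x \<inter> (\<Union>i\<in>insert x F. P i) \<subseteq> (\<Union>i\<in>F. P i)" by auto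
    ultimately have "(\<Union>i\<in>F. P i) \<in> W" using uf_props(2)[OF U] by blast
    then show ?thesis using insert.IH by blast
  qed
qed

lemma rich:
  assumes NP: "non_P_point_std W" and H: "H \<in> W"
  shows "\<exists>H'\<in>W. H' \<subseteq> H \<and> infinite (fst ` H') \<and> (\<forall>p\<in>H'. infinite {b. (fst p, b) \<in> H'})"
proof -
  have U: "is_ultrafilter W" and NPd: "\<forall>A\<in>W. \<not> finite_to_one_on fst A \<and> \<not> constant_on fst A"
    using NP unfolding non_P_point_std_def by auto
  define H' where "H' = {p\<in>H. infinite {q\<in>H. fst q = fst p}}"
  have H'W: "H' \<in> W"
  proof (rule ccontr)
    assume "H' \<notin> W"
    then have "- H' \<in> W" using uf_props(4)[OF U] by blast
    from uf_props(3)[OF U H this] have HW: "H \<inter> - H' \<in> W" .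
    have "finite_to_one_on fst (H \<inter> - H')"
      unfolding finite_to_one_on_def
    proof
      fix k
      show "finite {p \<in> H \<inter> - H'. fst p = k}"
      proof (cases "\<exists>p\<in>H \<inter> - H'. fst p = k")
        case True
        then obtain p where p: "p \<in> H" "p \<notin> H'" "fst p = k" by auto
        then have "finite {q\<in>H. fst q = k}" unfolding H'_def by auto
        then show ?thesis by (rule rev_finite_subset) auto
      next
        case False
        then have e: "{p \<in> H \<inter> - H'. fst p = k} = {}" by blast
        show ?thesis by (subst e) simp
      qed
    qed
    then show False using NPd HW by blast
  qed
  have fib: "{b. (fst p, b) \<in> H'} = snd ` {q\<in>H. fst q = fst p}" if "p \<in> H'" for p
  proof
    show "{b. (fst p, b) \<in> H'} \<subseteq> snd ` {q\<in>H. fst q = fst p}"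
      unfolding H'_def by (auto simp: image_iff)
    show "snd ` {q\<in>H. fst q = fst p} \<subseteq> {b. (fst p, b) \<in> H'}"
      using that unfolding H'_def by auto
  qed
  have "infinite {b. (fst p, b) \<in> H'}" if "p \<in> H'" for p
  proof
    assume "finite {b. (fst p, b) \<in> H'}"
    then have "finite (snd ` {q\<in>H. fst q = fst p})" using fib[OF that] by simp
    moreover have "inj_on snd {q\<in>H. fst q = fst p}" by (auto simp: inj_on_def prod_eq_iff)
    ultimately have "finite {q\<in>H. fst q = fst p}" using finite_image_iff by blast
    then show False using that unfolding H'_def by auto
  qed
  moreover have "infinite (fst ` H')"
  proof
    assume fin: "finite (fst ` H')"
    have "H' = (\<Union>a\<in>fst ` H'. {p\<in>H'. fst p = a})" by auto
    then have "(\<Union>a\<in>fst ` H'. {p\<in>H'. fst p = a}) \<in> W" using H'W by simp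
    then obtain a where "{p\<in>H'. fst p = a} \<in> W" using uf_finite_union[OF U fin] by blast
    moreover have "constant_on fst {p\<in>H'. fst p = a}" unfolding constant_on_def by auto
    ultimately show False using NPd by blast
  qed
  moreover have "H' \<subseteq> H" unfolding H'_def by auto
  ultimately show ?thesis using H'W by blast
qed

definition rk :: "nat \<Rightarrow> (sym \<times> sym) set \<Rightarrow> sym \<Rightarrow> nat" where
  "rk n R s = card {t\<in>Sym n. strict_in R t s}"

lemma finite_Sym: "finite (Sym n)" unfolding Sym_def by simp

lemma rk_le:
  assumes R: "is_ntype n R" and s: "s \<in> Sym n" and t: "t \<in> Sym n"
  shows "(s, t) \<in> R \<longleftrightarrow> rk n R s \<le> rk n R t"
proof -
  have tr: "trans R" and tot: "\<forall>s\<in>Sym n. \<forall>t\<in>Sym n. (s, t) \<in> R \<or> (t, s) \<in> R"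
    using R unfolding is_ntype_def by auto
  show ?thesis
  proof
    assume st: "(s, t) \<in> R"
    have "{u\<in>Sym n. strict_in R u s} \<subseteq> {u\<in>Sym n. strict_in R u t}"
      using st tr unfolding strict_in_def trans_def by blast
    then show "rk n R s \<le> rk n R t" unfolding rk_def
      by (rule card_mono[rotated]) (simp add: finite_Sym)
  next
    assume le: "rk n R s \<le> rk n R t"
    show "(s, t) \<in> R"
    proof (rule ccontr)
      assume ns: "(s, t) \<notin> R"
      then have ts: "(t, s) \<in> R" using tot s t by blast
      have "insert t {u\<in>Sym n. strict_in R u t} \<subseteq> {u\<in>Sym n. strict_in R u s}"
        using ns ts tr t unfolding strict_in_def trans_def by blast
      note sub = this
      have nt: "t \<notin> {u\<in>Sym n. strict_in R u t}" unfolding strict_in_def by auto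
      have "card (insert t {u\<in>Sym n. strict_in R u t}) \<le> card {u\<in>Sym n. strict_in R u s}"
        by (rule card_mono[OF _ sub]) (simp add: finite_Sym)
      moreover have "card (insert t {u\<in>Sym n. strict_in R u t}) = Suc (card {u\<in>Sym n. strict_in R u t})"
        by (rule card_insert_disjoint[OF _ nt]) (simp add: finite_Sym)
      ultimately show False using le unfolding rk_def by simp
    qed
  qed
qed

primrec Gs :: "(nat \<Rightarrow> (nat \<Rightarrow> nat) \<Rightarrow> nat) \<Rightarrow> nat \<Rightarrow> nat \<Rightarrow> nat" where
  "Gs st 0 = (\<lambda>_. 0)"
| "Gs st (Suc k) = (Gs st k)(k := st k (Gs st k))"

lemma Gs_stable: "m < k \<Longrightarrow> Gs st k m = st m (Gs st m)"
  by (induction k) (auto simp: less_Suc_eq)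

lemma rk_props:
  assumes R: "is_ntype n R"
  shows "\<And>i j. i \<in> {1..n} \<Longrightarrow> j \<in> {1..n} \<Longrightarrow> i < j \<Longrightarrow> rk n R (True, i) < rk n R (True, j)"
    "\<And>i. i \<in> {1..n} \<Longrightarrow> rk n R (False, i) < rk n R (True, i)"
    "\<And>i j. i \<in> {1..n} \<Longrightarrow> j \<in> {1..n} \<Longrightarrow> rk n R (False, i) \<noteq> rk n R (True, j)"
proof -
  fix i j assume ij: "i \<in> {1..n}" "j \<in> {1..n}" "i < j"
  then have "(( True, j), (True, i)) \<notin> R" using R unfolding is_ntype_def strict_in_def by blast
  then show "rk n R (True, i) < rk n R (True, j)"
    using rk_le[OF R, of "(True, j)" "(True, i)"] ij by (auto simp: Sym_def)
next
  fix i assume i: "i \<in> {1..n}"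
  then have "(( True, i), (False, i)) \<notin> R" using R unfolding is_ntype_def strict_in_def by blast
  then show "rk n R (False, i) < rk n R (True, i)"
    using rk_le[OF R, of "(True, i)" "(False, i)"] i by (auto simp: Sym_def)
next
  fix i j assume ij: "i \<in> {1..n}" "j \<in> {1..n}"
  show "rk n R (False, i) \<noteq> rk n R (True, j)"
  proof
    assume e: "rk n R (False, i) = rk n R (True, j)"
    have m: "(False, i) \<in> Sym n" "(True, j) \<in> Sym n" using ij by (auto simp: Sym_def)
    have "((False, i), (True, j)) \<in> R" "((True, j), (False, i)) \<in> R"
      using rk_le[OF R m] rk_le[OF R m(2) m(1)] e by auto
    then show False using R m unfolding is_ntype_def by force
  qed
qed

lemma realize_exists:
  assumes R: "is_ntype n R" and NP: "non_P_point_std W" and H: "H \<in> W"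
  shows "\<exists>F. F \<in> typed_subsets n H R"
proof -
  obtain H' where H'W: "H' \<in> W" and H'H: "H' \<subseteq> H" and infA: "infinite (fst ` H')"
    and fibs: "\<forall>p\<in>H'. infinite {b. (fst p, b) \<in> H'}"
    using rich[OF NP H] by blast
  let ?r = "rk n R"
  define isY where "isY k = (\<exists>i\<in>{1..n}. ?r (True, i) = k)" for k
  define yi where "yi k = (THE i. i \<in> {1..n} \<and> ?r (True, i) = k)" for k
  define st where "st k g = (let p = (if k = 0 then 0 else g (k - 1)) in
     if isY k then (SOME b. p < b \<and> (g (?r (False, yi k)), b) \<in> H')
     else (SOME a. p < a \<and> a \<in> fst ` H'))" for k and g :: "nat \<Rightarrow> nat"
  define g where "g k = st k (Gs st k)" for k
  have Gs_g: "Gs st k m = g m" if "m < k" for k m using Gs_stable[OF that] g_def by simp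
  have yi: "yi (?r (True, i)) = i" if "i \<in> {1..n}" for i
    unfolding yi_def
  proof (rule the_equality)
    fix j assume j: "j \<in> {1..n} \<and> ?r (True, j) = ?r (True, i)"
    show "j = i"
      using rk_props(1)[OF R, of i j] rk_props(1)[OF R, of j i] j that by (metis less_irrefl linorder_cases)
  qed (use that in auto)
  have xcase: "\<not> isY k \<Longrightarrow> g k \<in> fst ` H' \<and> (k > 0 \<longrightarrow> g (k - 1) < g k)" for k
  proof -
    assume nY: "\<not> isY k"
    define p where "p = (if k = 0 then 0 else Gs st k (k - 1))"
    have "g k = (SOME a. p < a \<and> a \<in> fst ` H')" unfolding g_def st_def p_def using nY by simp
    moreover have "\<exists>a. p < a \<and> a \<in> fst ` H'" using infA unfolding infinite_nat_iff_unbounded by blast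
    ultimately have "p < g k \<and> g k \<in> fst ` H'" by (metis (mono_tags, lifting) someI_ex)
    then show ?thesis using Gs_g[of "k - 1" k] unfolding p_def by auto
  qed
  have ycase: "(g (?r (False, i)), g (?r (True, i))) \<in> H' \<and> (?r (True, i) > 0 \<longrightarrow> g (?r (True, i) - 1) < g (?r (True, i)))"
    if i: "i \<in> {1..n}" for i
  proof -
    define k where "k = ?r (True, i)"
    have Y: "isY k" unfolding isY_def k_def using i by blast
    have yk: "yi k = i" using yi[OF i] k_def by simp
    have lt: "?r (False, i) < k" using rk_props(2)[OF R i] k_def by simp
    have nY: "\<not> isY (?r (False, i))"
    proof
      assume "isY (?r (False, i))"
      then obtain j where j: "j \<in> {1..n}" "?r (True, j) = ?r (False, i)" unfolding isY_def by blast
      show False using rk_props(3)[OF R i j(1)] j(2) by simp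
    qed
    have a_in: "g (?r (False, i)) \<in> fst ` H'" using xcase[OF nY] by simp
    define p where "p = (if k = 0 then 0 else Gs st k (k - 1))"
    have "g k = (SOME b. p < b \<and> (Gs st k (?r (False, i)), b) \<in> H')"
      unfolding g_def st_def p_def using Y yk by simp
    also have "Gs st k (?r (False, i)) = g (?r (False, i))" using Gs_g[OF lt] .
    finally have gk: "g k = (SOME b. p < b \<and> (g (?r (False, i)), b) \<in> H')" .
    obtain q where q: "q \<in> H'" "fst q = g (?r (False, i))" using a_in by auto
    have "infinite {b. (g (?r (False, i)), b) \<in> H'}" using fibs q by metis
    then have "\<exists>b. p < b \<and> (g (?r (False, i)), b) \<in> H'" unfolding infinite_nat_iff_unbounded by blast
    then have "p < g k \<and> (g (?r (False, i)), g k) \<in> H'" unfolding gk by (rule someI_ex)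
    then show ?thesis using Gs_g[of "k - 1" k] unfolding p_def k_def[symmetric] by auto
  qed
  have gstep: "g k < g (Suc k)" for k
  proof (cases "isY (Suc k)")
    case True
    then obtain i where i: "i \<in> {1..n}" "?r (True, i) = Suc k" unfolding isY_def by blast
    show ?thesis using ycase[OF i(1)] i(2) by simp
  next
    case False then show ?thesis using xcase[OF False] by simp
  qed
  have smg: "strict_mono g" using gstep by (simp add: strict_mono_Suc_iff)
  define a where "a i = g (?r (False, i))" for i
  define b where "b i = g (?r (True, i))" for i
  define F where "F = (\<lambda>i. (a i, b i)) ` {1..n}"
  have smb: "strict_mono_on {1..n} b"
  proof (rule strict_mono_onI)
    fix i j assume ij: "i \<in> {1..n}" "j \<in> {1..n}" "i < j"
    have "rk n R (True, i) < rk n R (True, j)" using rk_props(1)[OF R ij(1) ij(2) ij(3)] .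
    then have "g (rk n R (True, i)) < g (rk n R (True, j))" using smg by (simp add: strict_mono_less)
    then show "b i < b j" unfolding b_def .
  qed
  have FH: "F \<subseteq> H"
  proof
    fix x assume "x \<in> F"
    then obtain i where i: "i \<in> {1..n}" "x = (a i, b i)" unfolding F_def by blast
    have "(a i, b i) \<in> H'" unfolding a_def b_def using ycase[OF i(1)] by (rule conjunct1)
    then show "x \<in> H" using i(2) H'H by blast
  qed
  have injF: "inj_on (\<lambda>i. (a i, b i)) {1..n}"
  proof (rule inj_onI)
    fix i j assume ij: "i \<in> {1..n}" "j \<in> {1..n}" "(a i, b i) = (a j, b j)"
    then have "b i = b j" by simp
    then show "i = j" using inj_onD[OF strict_mono_on_imp_inj_on[OF smb]] ij(1,2) by blast
  qed
  have cardF: "card F = n" unfolding F_def using card_image[OF injF] by simp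
  have val: "(if fst s then b (snd s) else a (snd s)) = g (?r s)" for s
    unfolding a_def b_def by (cases s) auto
  have "realizes n F R"
    unfolding realizes_def
  proof (intro exI conjI ballI)
    show "strict_mono_on {1..n} b" by (rule smb)
    show "F = (\<lambda>i. (a i, b i)) ` {1..n}" by (rule F_def)
    fix s t assume st: "s \<in> Sym n" "t \<in> Sym n"
    show "((s, t) \<in> R) = ((if fst s then b (snd s) else a (snd s)) \<le> (if fst t then b (snd t) else a (snd t)))"
      unfolding val using rk_le[OF R st] strict_mono_less_eq[OF smg] by simp
  qed
  then have "F \<in> typed_subsets n H R" unfolding typed_subsets_def F_def
    using FH cardF F_def by auto
  then show ?thesis by blast
qed


lemma below_card:
  assumes sm: "strict_mono_on {1..n} (b :: nat \<Rightarrow> nat)" and i: "i \<in> {1..n}"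
  shows "card {x\<in>b ` {1..n}. x < b i} = i - 1"
proof -
  have "{x\<in>b ` {1..n}. x < b i} = b ` {1..<i}"
  proof
    show "{x\<in>b ` {1..n}. x < b i} \<subseteq> b ` {1..<i}"
    proof
      fix x assume "x \<in> {x\<in>b ` {1..n}. x < b i}"
      then obtain j where j: "j \<in> {1..n}" "x = b j" "b j < b i" by auto
      have "j < i"
      proof (rule ccontr)
        assume "\<not> j < i"
        then have "b i \<le> b j" using strict_mono_on_leD[OF sm i j(1)] by simp
        then show False using j(3) by simp
      qed
      then show "x \<in> b ` {1..<i}" using j by auto
    qed
    show "b ` {1..<i} \<subseteq> {x\<in>b ` {1..n}. x < b i}"
    proof
      fix x assume "x \<in> b ` {1..<i}"
      then obtain j where j: "j \<in> {1..<i}" "x = b j" by auto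
      have jn: "j \<in> {1..n}" using j(1) i by auto
      have "b j < b i" using strict_mono_onD[OF sm jn i] j(1) by simp
      then show "x \<in> {x\<in>b ` {1..n}. x < b i}" using jn j(2) by auto
    qed
  qed
  moreover have "inj_on b {1..<i}"
    by (rule inj_on_subset[OF strict_mono_on_imp_inj_on[OF sm]]) (use i in auto)
  ultimately show ?thesis by (simp add: card_image)
qed

lemma sm_eq:
  assumes s1: "strict_mono_on {1..n} (b1 :: nat \<Rightarrow> nat)" and s2: "strict_mono_on {1..n} b2"
    and e: "b1 ` {1..n} = b2 ` {1..n}" and i: "i \<in> {1..n}"
  shows "b1 i = b2 i"
proof -
  obtain j where j: "j \<in> {1..n}" "b1 i = b2 j" using e i by blast
  have "i - 1 = j - 1" using below_card[OF s1 i] below_card[OF s2 j(1)] e j(2) by simp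
  then have "i = j" using i j(1) by auto
  then show ?thesis using j by simp
qed

lemma realizes_unique:
  assumes R1: "is_ntype n R1" and R2: "is_ntype n R2"
    and r1: "realizes n F R1" and r2: "realizes n F R2"
  shows "R1 = R2"
proof -
  obtain a1 b1 where s1: "strict_mono_on {1..n} b1" and F1: "F = (\<lambda>i. (a1 i, b1 i)) ` {1..n}"
    and v1: "\<forall>s\<in>Sym n. \<forall>t\<in>Sym n. (s, t) \<in> R1 \<longleftrightarrow>
            (if fst s then b1 (snd s) else a1 (snd s)) \<le> (if fst t then b1 (snd t) else a1 (snd t))"
    using r1 unfolding realizes_def by blast
  obtain a2 b2 where s2: "strict_mono_on {1..n} b2" and F2: "F = (\<lambda>i. (a2 i, b2 i)) ` {1..n}"
    and v2: "\<forall>s\<in>Sym n. \<forall>t\<in>Sym n. (s, t) \<in> R2 \<longleftrightarrow>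
            (if fst s then b2 (snd s) else a2 (snd s)) \<le> (if fst t then b2 (snd t) else a2 (snd t))"
    using r2 unfolding realizes_def by blast
  have e1: "snd ` F = b1 ` {1..n}" unfolding F1 by (simp add: image_image)
  have e2: "snd ` F = b2 ` {1..n}" unfolding F2 by (simp add: image_image)
  have e: "b1 ` {1..n} = b2 ` {1..n}" using e1 e2 by simp
  have be: "b1 i = b2 i" if "i \<in> {1..n}" for i using sm_eq[OF s1 s2 e that] .
  have ae: "a1 i = a2 i" if i: "i \<in> {1..n}" for i
  proof -
    have "(a1 i, b1 i) \<in> F" unfolding F1 using i by blast
    then obtain j where j: "j \<in> {1..n}" "(a1 i, b1 i) = (a2 j, b2 j)" unfolding F2 by blast
    have "b2 j = b2 i" using j(2) be[OF i] by simp
    then have "j = i" using inj_onD[OF strict_mono_on_imp_inj_on[OF s2]] i j(1) by blast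
    then show ?thesis using j(2) by simp
  qed
  have vals: "(if fst s then b1 (snd s) else a1 (snd s)) = (if fst s then b2 (snd s) else a2 (snd s))"
    if "s \<in> Sym n" for s
    using that be ae unfolding Sym_def by auto
  have sub1: "R1 \<subseteq> Sym n \<times> Sym n" and sub2: "R2 \<subseteq> Sym n \<times> Sym n"
    using R1 R2 unfolding is_ntype_def by auto
  show ?thesis
  proof (rule set_eqI)
    fix x :: "sym \<times> sym"
    obtain s t where x: "x = (s, t)" by (cases x)
    show "x \<in> R1 \<longleftrightarrow> x \<in> R2"
    proof (cases "s \<in> Sym n \<and> t \<in> Sym n")
      case True
      then show ?thesis using v1 v2 vals[of s] vals[of t] x by simp
    next
      case False
      then show ?thesis using sub1 sub2 x by auto
    qed
  qed
qed


theorem mainTheorem2: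
  fixes n :: nat and W :: "pt set set" and \<tau> :: "(sym \<times> sym) set"
    and c :: "pt set \<Rightarrow> nat"
  assumes "n \<ge> 1"
    and "non_P_point_std W"
    and "weakly_ramsey n (T n) W"
    and "is_ntype n \<tau>"
    and "finite (c ` typed_subsets n UNIV \<tau>)"
  shows "\<exists>H\<in>W. \<exists>k. \<forall>F\<in>typed_subsets n H \<tau>. c F = k"
proof -
  note NP = assms(2) and WR = assms(3) and tau = assms(4) and finc = assms(5)
  define Ty where "Ty = {R. is_ntype n R}"
  have finTy: "finite Ty"
  proof (rule finite_subset)
    show "Ty \<subseteq> Pow (Sym n \<times> Sym n)" unfolding Ty_def is_ntype_def by auto
    show "finite (Pow (Sym n \<times> Sym n))" by (simp add: finite_Sym)
  qed
  have tauTy: "\<tau> \<in> Ty" unfolding Ty_def using tau by simp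
  have TnTy: "T n = card Ty" unfolding T_def Ty_def ..
  obtain idx :: "(sym \<times> sym) set \<Rightarrow> nat" and m where idx: "inj_on idx Ty"
    using finite_imp_inj_to_nat_seg[OF finTy] by blast
  define P where "P F R = (is_ntype n R \<and> realizes n F R)" for F R
  define col where "col F = (if F \<in> typed_subsets n UNIV \<tau> then 3 * c F + 2
      else if (\<exists>R. P F R) then 3 * idx (THE R. P F R) + 1 else 0)" for F
  have theP: "(THE R. P F R) = R" if "P F R" for F R
    using that realizes_unique unfolding P_def by (metis (no_types, lifting) the_equality)
  have fincol: "finite (col ` nsubsets UNIV n)"
  proof (rule finite_subset)
    show "col ` nsubsets UNIV n \<subseteq> {0} \<union> (\<lambda>x. 3 * x + 2) ` (c ` typed_subsets n UNIV \<tau>)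
        \<union> (\<lambda>R. 3 * idx R + 1) ` Ty"
    proof
      fix y assume "y \<in> col ` nsubsets UNIV n"
      then obtain F where y: "y = col F" by blast
      show "y \<in> {0} \<union> (\<lambda>x. 3 * x + 2) ` (c ` typed_subsets n UNIV \<tau>) \<union> (\<lambda>R. 3 * idx R + 1) ` Ty"
      proof (cases "F \<in> typed_subsets n UNIV \<tau>")
        case True then show ?thesis unfolding y col_def by auto
      next
        case False
        show ?thesis
        proof (cases "\<exists>R. P F R")
          case True
          then obtain R where R: "P F R" by blast
          then have "R \<in> Ty" unfolding P_def Ty_def by simp
          then show ?thesis unfolding y col_def using False True theP[OF R] by auto
        next
          case F2: False
          show ?thesis unfolding y col_def using False F2 by auto
        qed
      qed
    qed
    show "finite ({0} \<union> (\<lambda>x. 3 * x + 2) ` (c ` typed_subsets n UNIV \<tau>) \<union> (\<lambda>R. 3 * idx R + 1) ` Ty)"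
      using finc finTy by simp
  qed
  obtain H where HW: "H \<in> W" and cardH: "card (col ` nsubsets H n) \<le> T n"
    using WR fincol unfolding weakly_ramsey_def by blast
  have finH: "finite (col ` nsubsets H n)"
    by (rule finite_subset[OF _ fincol]) (auto simp: nsubsets_def)
  have "\<exists>k. \<forall>F\<in>typed_subsets n H \<tau>. c F = k"
  proof (rule ccontr)
    assume nk: "\<not> (\<exists>k. \<forall>F\<in>typed_subsets n H \<tau>. c F = k)"
    then obtain F1 where F1: "F1 \<in> typed_subsets n H \<tau>" by blast
    from nk obtain F2 where F2: "F2 \<in> typed_subsets n H \<tau>" "c F2 \<noteq> c F1" by blast
    have tsub: "typed_subsets n H R \<subseteq> nsubsets H n" for R
      unfolding typed_subsets_def nsubsets_def by auto
    have tU: "F \<in> typed_subsets n UNIV \<tau>" if "F \<in> typed_subsets n H \<tau>" for F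
      using that unfolding typed_subsets_def by auto
    have c1: "col F1 = 3 * c F1 + 2" unfolding col_def using tU[OF F1] by simp
    have c2: "col F2 = 3 * c F2 + 2" unfolding col_def using tU[OF F2(1)] by simp
    have cR: "3 * idx R + 1 \<in> col ` nsubsets H n" if R: "R \<in> Ty - {\<tau>}" for R
    proof -
      have Rn: "is_ntype n R" using R unfolding Ty_def by simp
      obtain G where G: "G \<in> typed_subsets n H R" using realize_exists[OF Rn NP HW] by blast
      have PG: "P G R" unfolding P_def using Rn G unfolding typed_subsets_def by simp
      have "G \<notin> typed_subsets n UNIV \<tau>"
      proof
        assume "G \<in> typed_subsets n UNIV \<tau>"
        then have "realizes n G \<tau>" unfolding typed_subsets_def by simp
        then have "R = \<tau>" using realizes_unique[OF Rn tau] PG unfolding P_def by blast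
        then show False using R by simp
      qed
      then have "col G = 3 * idx R + 1" unfolding col_def using PG theP[OF PG] by auto
      then show ?thesis using G tsub by force
    qed
    define S where "S = {3 * c F1 + 2, 3 * c F2 + 2} \<union> (\<lambda>R. 3 * idx R + 1) ` (Ty - {\<tau>})"
    have m1: "3 * c F1 + 2 \<in> col ` nsubsets H n" using c1 F1 tsub by (metis image_eqI subsetD)
    have m2: "3 * c F2 + 2 \<in> col ` nsubsets H n" using c2 F2(1) tsub by (metis image_eqI subsetD)
    have SS: "S \<subseteq> col ` nsubsets H n"
      unfolding S_def using m1 m2 cR by blast
    have disj: "{3 * c F1 + 2, 3 * c F2 + 2} \<inter> (\<lambda>R. 3 * idx R + 1) ` (Ty - {\<tau>}) = {}"
    proof -
      have ne: "3 * x + 2 \<noteq> 3 * y + (1::nat)" for x y by presburger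
      show ?thesis using ne by blast
    qed
    have inj3: "inj_on (\<lambda>R. 3 * idx R + 1) (Ty - {\<tau>})"
    proof (rule inj_onI)
      fix R R' assume RR: "R \<in> Ty - {\<tau>}" "R' \<in> Ty - {\<tau>}" "3 * idx R + 1 = 3 * idx R' + 1"
      then have "idx R = idx R'" by simp
      then show "R = R'" using inj_onD[OF idx] RR(1,2) by blast
    qed
    have "card S = card {3 * c F1 + 2, 3 * c F2 + 2} + card ((\<lambda>R. 3 * idx R + 1) ` (Ty - {\<tau>}))"
      unfolding S_def by (rule card_Un_disjoint) (use finTy disj in auto)
    also have "card {3 * c F1 + 2, 3 * c F2 + 2} = 2" using F2(2) by simp
    also have "card ((\<lambda>R. 3 * idx R + 1) ` (Ty - {\<tau>})) = card (Ty - {\<tau>})"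
      by (rule card_image[OF inj3])
    also have "card (Ty - {\<tau>}) = card Ty - 1" using tauTy finTy by simp
    finally have cS: "card S = 2 + (card Ty - 1)" .
    have "card Ty > 0" using tauTy finTy card_gt_0_iff by blast
    then have "card S = T n + 1" using cS TnTy by simp
    moreover have "card S \<le> card (col ` nsubsets H n)" by (rule card_mono[OF finH SS])
    ultimately show False using cardH by simp
  qed
  then show ?thesis using HW by blast
qed

end
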